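(* Let $d\ge 2$. For a finite subset $V\subset S^{d-1}$ with $|V|\ge 2$ and a region $\mathcal{A}\subseteq S^{d-1}$, let $N(V,\mathcal{A})$ be the minimal number $N$ such that $\mathcal{A}$ can be written as a disjoint union of subregions $\mathcal{A}_1,\dots,\mathcal{A}_N$ with $\operatorname{Diam}(\mathcal{A}_i)<d_{\min}(V)$ for all $i$, and set $$C(V,\mathcal{A})=\pi(\mathcal{A})-\pi^2(\mathcal{A})+\Big(\frac{N(V,\mathcal{A})}{|V|}-1\Big)\pi(\mathcal{A}).$$ Let $V,V'$ be two finite subsets of $S^{d-1}$. If either (1) $|V|=|V'|$ and $d_{\min}(V)>d_{\min}(V')$, or (2) $d_{\min}(V)=d_{\min}(V')$ and $|V|>|V'|$, then $C(V,\mathcal{A})\le C(V',\mathcal{A})$ for every region $\mathcal{A}$ of $S^{d-1}$.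
   Context: $S^{d-1}$ is the unit sphere in $\mathbb{R}^d$ with Euclidean norm $\|\cdot\|$. $d_{\min}(V)=\min\{\|v-v'\| : v,v'\in V,\ v\neq v'\}$. For a region $\mathcal{B}\subseteq S^{d-1}$, $\operatorname{Diam}(\mathcal{B})=\sup\{\|x-x'\|: x,x'\in\mathcal{B}\}$. $\pi$ is the normalized uniform surface probability measure on $S^{d-1}$; regions are measurable subsets of $S^{d-1}$ admitting such finite decompositions. (The quantity $C(V,\mathcal{A})$ is an upper bound for the variance of $\frac{1}{|V|}\sum_{v\in V}I_{\mathcal{A}}(Tv)$ with $T$ Haar-uniform on $O(d)$.) *)

theory Defs
  imports "HOL-Analysis.Analysis"
begin

definition dmin :: "'a::euclidean_space set \<Rightarrow> real" where
  "dmin V = Min {dist v v' | v v'. v \<in> V \<and> v' \<in> V \<and> v \<noteq> v'}"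

text \<open>Cone over a subset of the sphere (radii in (0,1]); its normalized Lebesgue
  volume is the normalized uniform surface measure of the subset.\<close>
definition sphere_cone :: "'a::euclidean_space set \<Rightarrow> 'a set" where
  "sphere_cone A = {t *\<^sub>R x | t x. 0 < t \<and> t \<le> 1 \<and> x \<in> A}"

definition sphere_region :: "'a::euclidean_space set \<Rightarrow> bool" where
  "sphere_region A \<longleftrightarrow> A \<subseteq> sphere 0 1 \<and> sphere_cone A \<in> sets lebesgue"

definition sphere_prob :: "'a::euclidean_space set \<Rightarrow> real" where
  "sphere_prob A = measure lebesgue (sphere_cone A) / measure lebesgue (ball (0::'a) 1)"

definition Nsplit :: "'a::euclidean_space set \<Rightarrow> 'a set \<Rightarrow> nat" where
  "Nsplit V A = (LEAST n. \<exists>P :: nat \<Rightarrow> 'a set.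
      (\<forall>i<n. sphere_region (P i) \<and> diameter (P i) < dmin V) \<and>
      disjoint_family_on P {..<n} \<and> (\<Union>i<n. P i) = A)"

definition Cvar :: "'a::euclidean_space set \<Rightarrow> 'a set \<Rightarrow> real" where
  "Cvar V A = sphere_prob A - (sphere_prob A)\<^sup>2
     + (real (Nsplit V A) / real (card V) - 1) * sphere_prob A"

end

theory Submission
  imports Defs
begin
lemma cone_inter_sgn:
  assumes "A \<subseteq> sphere 0 1"
  shows "sphere_cone (A \<inter> B) = sphere_cone A \<inter> (sgn -` B)"
proof
  show "sphere_cone (A \<inter> B) \<subseteq> sphere_cone A \<inter> sgn -` B"
  proof
    fix y assume "y \<in> sphere_cone (A \<inter> B)"
    then obtain t x where y: "y = t *\<^sub>R x" "0 < t" "t \<le> 1" "x \<in> A" "x \<in> B"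
      unfolding sphere_cone_def by blast
    have "norm x = 1" using assms y(4) by auto
    hence "sgn x = x" by (simp add: sgn_div_norm)
    hence "sgn y = x" using y(1,2) by (simp add: sgn_scaleR)
    thus "y \<in> sphere_cone A \<inter> sgn -` B" using y unfolding sphere_cone_def by blast
  qed
next
  show "sphere_cone A \<inter> sgn -` B \<subseteq> sphere_cone (A \<inter> B)"
  proof
    fix y assume h: "y \<in> sphere_cone A \<inter> sgn -` B"
    then obtain t x where y: "y = t *\<^sub>R x" "0 < t" "t \<le> 1" "x \<in> A"
      unfolding sphere_cone_def by blast
    have "norm x = 1" using assms y(4) by auto
    hence "sgn x = x" by (simp add: sgn_div_norm)
    hence "sgn y = x" using y(1,2) by (simp add: sgn_scaleR)
    hence "x \<in> B" using h by auto
    thus "y \<in> sphere_cone (A \<inter> B)" using y unfolding sphere_cone_def by blast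
  qed
qed

lemma region_inter_borel:
  assumes "sphere_region A" "B \<in> sets borel"
  shows "sphere_region (A \<inter> B)"
proof -
  have s: "A \<subseteq> sphere 0 1" "sphere_cone A \<in> sets lebesgue"
    using assms(1) unfolding sphere_region_def by auto
  have "sgn -` B \<in> sets lborel"
    using measurable_sets[OF borel_measurable_sgn assms(2)] by simp
  hence "sgn -` B \<in> sets lebesgue" by (rule sets_completionI_sets)
  hence "sphere_cone A \<inter> sgn -` B \<in> sets lebesgue"
    using s(2) by (rule sets.Int[rotated])
  hence "sphere_cone (A \<inter> B) \<in> sets lebesgue"
    using cone_inter_sgn[OF s(1)] by simp
  thus ?thesis using s unfolding sphere_region_def by blast
qed
lemma exists_split:
  fixes A :: "'a::euclidean_space set"
  assumes "sphere_region A" "\<delta> > 0"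
  shows "\<exists>(n::nat) P. (\<forall>i<n. sphere_region (P i) \<and> diameter (P i) < \<delta>) \<and>
      disjoint_family_on P {..<n} \<and> (\<Union>i<n. P i) = A"
proof -
  define r where "r = \<delta> / 3"
  have r: "r > 0" using assms r_def by auto
  have Asub: "A \<subseteq> sphere 0 1" using assms unfolding sphere_region_def by auto
  
  have cov: "sphere (0::'a) 1 \<subseteq> (\<Union>c\<in>sphere 0 1. ball c r)" using r by auto
  obtain C where C: "C \<subseteq> sphere 0 1" "finite C" "sphere (0::'a) 1 \<subseteq> (\<Union>c\<in>C. ball c r)"
    by (rule compactE_image[of "sphere (0::'a) 1" "sphere 0 1" "\<lambda>c. ball c r"]) (simp_all add: cov)
  obtain cs where cs: "set cs = C" using finite_list C(2) by blast
  define n where "n = length cs"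
  define P where "P j = A \<inter> (ball (cs!j) r - (\<Union>i<j. ball (cs!i) r))" for j
  have reg: "sphere_region (P i)" for i
  proof -
    have "ball (cs!i) r - (\<Union>i<i. ball (cs!i) r) \<in> sets borel"
      by (intro sets.Diff borel_open open_ball open_UN ballI)
    thus ?thesis unfolding P_def by (rule region_inter_borel[OF assms(1)])
  qed
  have diam: "diameter (P i) < \<delta>" for i
  proof -
    have "P i \<subseteq> ball (cs!i) r" unfolding P_def by blast
    hence "diameter (P i) \<le> diameter (ball (cs!i) r)"
      by (rule diameter_subset) (rule bounded_ball)
    also have "\<dots> = 2 * r" using r by (simp only: diameter_ball) simp
    finally show ?thesis using r_def assms(2) by linarith
  qed
  have disj: "disjoint_family_on P {..<n}"
    unfolding disjoint_family_on_def
  proof (intro ballI impI)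
    fix i j assume "i \<in> {..<n}" "j \<in> {..<n}" "i \<noteq> j"
    show "P i \<inter> P j = {}"
    proof (cases "i < j")
      case True thus ?thesis unfolding P_def by auto
    next
      case False hence "j < i" using \<open>i \<noteq> j\<close> by auto
      thus ?thesis unfolding P_def by auto
    qed
  qed
  have un: "(\<Union>i<n. P i) = A"
  proof
    show "(\<Union>i<n. P i) \<subseteq> A" unfolding P_def by auto
  next
    show "A \<subseteq> (\<Union>i<n. P i)"
    proof
      fix x assume x: "x \<in> A"
      hence "x \<in> sphere 0 1" using Asub by auto
      then obtain c where "c \<in> C" and "x \<in> ball c r" using C(3) by blast
      then obtain k where k0: "k < length cs" "cs!k = c"
        using cs by (auto simp: in_set_conv_nth)
      hence k: "k < n" "x \<in> ball (cs!k) r" using \<open>x \<in> ball c r\<close> n_def by auto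
      define j where "j = (LEAST j. x \<in> ball (cs!j) r)"
      have j1: "x \<in> ball (cs!j) r" unfolding j_def by (rule LeastI[of _ k]) (rule k(2))
      have j2: "j \<le> k" unfolding j_def by (rule Least_le) (rule k(2))
      have j3: "\<forall>i<j. x \<notin> ball (cs!i) r" unfolding j_def using not_less_Least by blast
      have "x \<in> P j" unfolding P_def using x j1 j3 by auto
      thus "x \<in> (\<Union>i<n. P i)" using j2 k(1) by auto
    qed
  qed
  have "(\<forall>i<n. sphere_region (P i) \<and> diameter (P i) < \<delta>) \<and> disjoint_family_on P {..<n} \<and> (\<Union>i<n. P i) = A" using reg diam disj un by blast
  thus ?thesis by blast
qed

lemma dmin_pos:
  fixes V :: "'a::euclidean_space set"
  assumes "finite V" "card V \<ge> 2"
  shows "dmin V > 0"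
proof -
  let ?S = "{dist v v' | v v'. v \<in> V \<and> v' \<in> V \<and> v \<noteq> v'}"
  have "?S \<subseteq> (\<lambda>(v,v'). dist v v') ` (V \<times> V)" by auto
  hence fin: "finite ?S" using assms(1) finite_subset by blast
  have "\<not> card V \<le> Suc 0" using assms(2) by simp
  hence "\<not> (\<forall>a\<in>V. \<forall>b\<in>V. a = b)" using card_le_Suc0_iff_eq[OF assms(1)] by blast
  then obtain a b where "a \<in> V" "b \<in> V" "a \<noteq> b" by blast
  hence ne: "?S \<noteq> {}" by blast
  have "\<forall>s\<in>?S. s > 0" by auto
  thus ?thesis unfolding dmin_def using Min_gr_iff[OF fin ne] by blast
qed

theorem corollary1:
  fixes V V' A :: "'a::euclidean_space set"
  assumes "DIM('a) \<ge> 2"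
    and "finite V" "V \<subseteq> sphere 0 1" "card V \<ge> 2"
    and "finite V'" "V' \<subseteq> sphere 0 1" "card V' \<ge> 2"
    and "(card V = card V' \<and> dmin V > dmin V') \<or> (dmin V = dmin V' \<and> card V > card V')"
    and "sphere_region A"
  shows "Cvar V A \<le> Cvar V' A"
proof -
  define p where "p = sphere_prob A"
  have p: "p \<ge> 0" unfolding p_def sphere_prob_def by simp
  have key: "real (Nsplit V A) / real (card V) \<le> real (Nsplit V' A) / real (card V')"
    using assms(8)
  proof
    assume h: "card V = card V' \<and> dmin V > dmin V'"
    have "\<exists>(n::nat) P. (\<forall>i<n. sphere_region (P i) \<and> diameter (P i) < dmin V') \<and>
      disjoint_family_on P {..<n} \<and> (\<Union>i<n. P i) = A"
      by (rule exists_split[OF assms(9) dmin_pos[OF assms(5,7)]])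
    hence "\<exists>P. (\<forall>i<Nsplit V' A. sphere_region (P i) \<and> diameter (P i) < dmin V') \<and>
      disjoint_family_on P {..<Nsplit V' A} \<and> (\<Union>i<Nsplit V' A. P i) = A"
      unfolding Nsplit_def by (rule LeastI_ex)
    then obtain P where P: "(\<forall>i<Nsplit V' A. sphere_region (P i) \<and> diameter (P i) < dmin V') \<and>
      disjoint_family_on P {..<Nsplit V' A} \<and> (\<Union>i<Nsplit V' A. P i) = A" by blast
    have "(\<forall>i<Nsplit V' A. sphere_region (P i) \<and> diameter (P i) < dmin V) \<and>
      disjoint_family_on P {..<Nsplit V' A} \<and> (\<Union>i<Nsplit V' A. P i) = A"
      using P h by force
    note Q = this
    have "Nsplit V A \<le> Nsplit V' A" unfolding Nsplit_def[of V] by (rule Least_le) (use Q in blast)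
    thus ?thesis using h by (simp add: divide_right_mono)
  next
    assume h: "dmin V = dmin V' \<and> card V > card V'"
    have "Nsplit V A = Nsplit V' A" unfolding Nsplit_def using h by simp
    moreover have "real (card V') > 0" using assms(7) by simp
    ultimately show ?thesis using h by (simp add: frac_le)
  qed
  have "Cvar V' A - Cvar V A = (real (Nsplit V' A) / real (card V') - real (Nsplit V A) / real (card V)) * p"
    unfolding Cvar_def p_def by (simp add: algebra_simps)
  also have "\<dots> \<ge> 0" using key p by simp
  finally show ?thesis by simp
qed

end
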